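(* Let $G$ be an undirected, weighted, connected graph on vertices $1,\dots,n$, and let $H$ be either its adjacency matrix or its Laplacian matrix, with eigenvalues $\lambda_1\le\cdots\le\lambda_n$. For real $t$ let $p(t)=|\langle s|e^{itH}|r\rangle|^2$ be the fidelity of state transfer from a sender vertex $s$ to a receiver vertex $r$, and suppose $p(t_0)=1$. Let $h\in\mathbb{R}$ satisfy $|h|<\frac{\pi}{\lambda_n-\lambda_1}$. Then \[ p(t_0+h)\ \ge\ 1-h^2\left(\langle s|H^2|s\rangle-\left(\langle s|H|s\rangle\right)^2\right). \]
   Context: For a weighted graph with edge weights $w(j,k)$, the adjacency matrix $A=[a_{jk}]$ has $a_{jk}=w(j,k)$ if $j,k$ are adjacent and $a_{jk}=0$ otherwise; the Laplacian is $L=R-A$ where $R$ is the diagonal matrix of row sums of $A$. $\{|1\rangle,\dots,|n\rangle\}$ is the standard basis of $\mathbb{C}^n$, so $\langle j|M|k\rangle$ is the $(j,k)$ entry of a matrix $M$. *)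

theory Defs
  imports "HOL-Analysis.Analysis"
begin

definition weighted_graph :: "('n \<Rightarrow> 'n \<Rightarrow> bool) \<Rightarrow> ('n \<Rightarrow> 'n \<Rightarrow> real) \<Rightarrow> bool" where
  "weighted_graph E w \<longleftrightarrow>
     (\<forall>j k. E j k \<longrightarrow> E k j) \<and> (\<forall>j. \<not> E j j) \<and>
     (\<forall>j k. w j k = w k j) \<and> (\<forall>j k. E j k \<longrightarrow> w j k > 0)"

definition connected_graph :: "('n \<Rightarrow> 'n \<Rightarrow> bool) \<Rightarrow> bool" where
  "connected_graph E \<longleftrightarrow> (\<forall>j k. E\<^sup>*\<^sup>* j k)"

definition adjacency_matrix ::
  "('n::finite \<Rightarrow> 'n \<Rightarrow> bool) \<Rightarrow> ('n \<Rightarrow> 'n \<Rightarrow> real) \<Rightarrow> real ^'n ^'n" where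
  "adjacency_matrix E w = (\<chi> j k. if E j k then w j k else 0)"

definition laplacian_matrix ::
  "('n::finite \<Rightarrow> 'n \<Rightarrow> bool) \<Rightarrow> ('n \<Rightarrow> 'n \<Rightarrow> real) \<Rightarrow> real ^'n ^'n" where
  "laplacian_matrix E w =
     (\<chi> j k. (if j = k then (\<Sum>l\<in>UNIV. adjacency_matrix E w $ j $ l) else 0)
              - adjacency_matrix E w $ j $ k)"

definition eigenvalues :: "real ^'n ^'n \<Rightarrow> real set" where
  "eigenvalues M = {c. \<exists>v. v \<noteq> 0 \<and> M *v v = c *\<^sub>R v}"

primrec mat_pow :: "'a::{semiring_1} ^'n::finite ^'n \<Rightarrow> nat \<Rightarrow> 'a ^'n ^'n" where
  "mat_pow M 0 = mat 1"
| "mat_pow M (Suc m) = M ** mat_pow M m"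

definition mat_exp :: "complex ^'n::finite ^'n \<Rightarrow> complex ^'n ^'n" where
  "mat_exp M = (\<chi> j k. \<Sum>m. mat_pow M m $ j $ k / of_nat (fact m))"

definition fidelity :: "real ^'n::finite ^'n \<Rightarrow> 'n \<Rightarrow> 'n \<Rightarrow> real \<Rightarrow> real" where
  "fidelity H s r t =
     (cmod (mat_exp (\<chi> j k. \<i> * complex_of_real t * complex_of_real (H $ j $ k)) $ s $ r))\<^sup>2"

end

theory Submission
  imports Defs
begin


lemma sym_inner:
  fixes H :: "real^'n^'n"
  assumes "transpose H = H"
  shows "inner (H *v x) y = inner x (H *v y)"
proof -
  have "H *v x = x v* H" using assms by (metis transpose_matrix_vector)
  then show ?thesis by (simp add: dot_lmul_matrix)
qed

lemma eigvec_in_subspace: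
  fixes H :: "real^'n^'n"
  assumes sym: "transpose H = H" and S: "subspace S" and inv: "\<And>x. x \<in> S \<Longrightarrow> H *v x \<in> S"
    and ne: "S \<noteq> {0}"
  shows "\<exists>x\<in>S. norm x = 1 \<and> (\<exists>c. H *v x = c *\<^sub>R x)"
proof -
  define q where "q = (\<lambda>y. inner y (H *v y))"
  let ?T = "S \<inter> sphere 0 1"
  have cT: "compact ?T" using closed_subspace[OF S] compact_sphere by (simp add: closed_Int_compact)
  obtain y where y: "y \<in> S" "y \<noteq> 0" using ne S subspace_0 by blast
  then have "y /\<^sub>R norm y \<in> ?T" using S by (auto simp: subspace_scale)
  hence neT: "?T \<noteq> {}" by blast
  have lin: "bounded_linear ((*v) H)" by (simp add: matrix_vector_mul_bounded_linear)
  have cont: "continuous_on ?T q" unfolding q_def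
    by (intro continuous_intros linear_continuous_on lin)
  obtain x where x: "x \<in> ?T" and xmax: "\<And>y. y \<in> ?T \<Longrightarrow> q y \<le> q x"
    using continuous_attains_sup[OF cT neT cont] by blast
  have xS: "x \<in> S" and nx: "norm x = 1" using x by auto
  have qscale: "q (c *\<^sub>R y) = c^2 * q y" for c y
    unfolding q_def by (simp add: matrix_vector_mult_scaleR power2_eq_square)
  have hom: "q y \<le> q x * (norm y)^2" if yS: "y \<in> S" for y
  proof (cases "y = 0")
    case True then show ?thesis by (simp add: q_def)
  next
    case False
    have "(1 / norm y) *\<^sub>R y \<in> ?T" using yS S False by (auto simp: subspace_scale)
    then have "q ((1 / norm y) *\<^sub>R y) \<le> q x" by (rule xmax)
    then have "q y / (norm y)^2 \<le> q x" by (simp add: qscale power_divide)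
    then show ?thesis using False by (simp add: divide_le_eq)
  qed
  define z where "z = H *v x - q x *\<^sub>R x"
  have zS: "z \<in> S" unfolding z_def using xS inv S by (simp add: subspace_diff subspace_scale)
  have xx: "inner x x = 1" using nx by (simp add: dot_square_norm)
  have zx: "inner z x = 0" unfolding z_def using xx
    by (simp add: inner_diff_left inner_diff_right q_def inner_commute)
  have zHx: "inner z (H *v x) = (norm z)^2"
  proof -
    have "H *v x = z + q x *\<^sub>R x" by (simp add: z_def)
    then show ?thesis using zx by (simp add: inner_add_right power2_norm_eq_inner)
  qed
  have "z = 0"
  proof (rule ccontr)
    assume zne: "z \<noteq> 0"
    define a where "a = (norm z)^2"
    define C where "C = q x * a - q z"
    have apos: "a > 0" using zne by (simp add: a_def)
    have key: "2*e*a \<le> e^2 * C" for e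
    proof -
      have "x + e *\<^sub>R z \<in> S" using xS zS S by (simp add: subspace_add subspace_scale)
      then have le: "q (x + e *\<^sub>R z) \<le> q x * (norm (x + e *\<^sub>R z))^2" by (rule hom)
      have e1: "q (x + e *\<^sub>R z) = q x + 2*e*a + e^2 * q z"
        using sym_inner[OF sym, of z x] zHx inner_commute[of x "H *v z"] unfolding q_def a_def
        by (simp add: matrix_vector_right_distrib matrix_vector_mult_scaleR inner_add_left inner_add_right
            power2_eq_square algebra_simps)
      have e2: "(norm (x + e *\<^sub>R z))^2 = 1 + e^2 * a"
      proof -
        have "(norm (x + e *\<^sub>R z))^2 = inner (x + e *\<^sub>R z) (x + e *\<^sub>R z)" by (rule power2_norm_eq_inner)
        also have "\<dots> = 1 + e^2 * inner z z" using xx zx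
          by (simp add: inner_add_left inner_add_right inner_commute power2_eq_square algebra_simps)
        finally show ?thesis by (simp add: a_def power2_norm_eq_inner)
      qed
      show ?thesis using le unfolding e1 e2 C_def by (simp add: algebra_simps)
    qed
    define e where "e = a / (\<bar>C\<bar> + 1)"
    have epos: "e > 0" using apos by (simp add: e_def add_pos_nonneg)
    have "2*e*a \<le> e^2 * \<bar>C\<bar>" using key[of e] by (smt (verit) mult_left_mono power2_eq_square zero_le_power2 abs_ge_self)
    then have "2*a \<le> e * \<bar>C\<bar>" using epos by (simp add: power2_eq_square mult.assoc)
    moreover have "e * \<bar>C\<bar> < a" using apos unfolding e_def
      by (simp add: field_simps)
    ultimately show False using apos by linarith
  qed
  then have "H *v x = q x *\<^sub>R x" by (simp add: z_def)
  then show ?thesis using xS nx by blast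
qed


lemma eig_sets:
  fixes H :: "real^'n^'n"
  assumes sym: "transpose H = H"
  shows "k \<le> CARD('n) \<Longrightarrow> \<exists>B. finite B \<and> card B = k \<and> pairwise orthogonal B \<and> (\<forall>b\<in>B. norm b = 1 \<and> (\<exists>c. H *v b = c *\<^sub>R b))"
proof (induction k)
  case 0 show ?case by (intro exI[of _ "{}"]) auto
next
  case (Suc k)
  then obtain B where fB: "finite B" and cB: "card B = k" and oB: "pairwise orthogonal B"
      and eB: "\<forall>b\<in>B. norm b = 1 \<and> (\<exists>c. H *v b = c *\<^sub>R b)" by auto
  define S where "S = {y. \<forall>b\<in>B. orthogonal b y}"
  have subS: "subspace S" unfolding S_def by (rule subspace_orthogonal_to_vectors)
  have inv: "H *v x \<in> S" if "x \<in> S" for x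
  proof -
    have "orthogonal b (H *v x)" if b: "b \<in> B" for b
    proof -
      obtain c where c: "H *v b = c *\<^sub>R b" using eB b by blast
      have "inner b (H *v x) = inner (H *v b) x" using sym_inner[OF sym, of b x] by simp
      also have "\<dots> = c * inner b x" by (simp add: c)
      also have "\<dots> = 0" using \<open>x \<in> S\<close> b by (simp add: S_def orthogonal_def)
      finally show ?thesis by (simp add: orthogonal_def)
    qed
    then show ?thesis by (simp add: S_def)
  qed
  have indB: "independent B"
    by (rule pairwise_orthogonal_independent[OF oB]) (use eB in force)
  have dimB: "dim (span B) = k" using dim_span_eq_card_independent[OF indB] cB by simp
  have eqS: "{y \<in> UNIV. \<forall>x \<in> span B. orthogonal x y} = S"
    unfolding S_def
    by (auto intro: span_base orthogonal_to_span simp: orthogonal_commute)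
  have "dim {y \<in> UNIV. \<forall>x \<in> span B. orthogonal x y} + dim (span B) = dim (UNIV :: (real^'n) set)"
    by (rule dim_subspace_orthogonal_to_vectors) auto
  then have "dim S + k = CARD('n)" using eqS dimB by simp
  then have "dim S \<noteq> 0" using Suc.prems by linarith
  then have neS: "S \<noteq> {0}" by auto
  obtain x where xS: "x \<in> S" and nx: "norm x = 1" and ex: "\<exists>c. H *v x = c *\<^sub>R x"
    using eigvec_in_subspace[OF sym subS inv neS] by blast
  have xB: "x \<notin> B"
  proof
    assume "x \<in> B"
    then have "orthogonal x x" using xS by (simp add: S_def)
    then show False using nx by (simp add: orthogonal_def)
  qed
  show ?case
  proof (intro exI[of _ "insert x B"] conjI)
    show "finite (insert x B)" using fB by simp
    show "card (insert x B) = Suc k" using fB xB cB by simp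
    show "pairwise orthogonal (insert x B)"
      using oB xS unfolding pairwise_insert S_def by (auto simp: orthogonal_commute)
    show "\<forall>b\<in>insert x B. norm b = 1 \<and> (\<exists>c. H *v b = c *\<^sub>R b)" using eB nx ex by auto
  qed
qed


definition diagm :: "('n::finite \<Rightarrow> 'a::semiring_1) \<Rightarrow> 'a^'n^'n" where
  "diagm d = (\<chi> i j. if i = j then d i else 0)"

lemma mult_diagm_entry: "(A ** diagm d) $ i $ j = A $ i $ j * d j"
  by (simp add: matrix_matrix_mult_def diagm_def if_distrib cong: if_cong)

lemma diagm_mult: "diagm d ** diagm e = diagm (\<lambda>i. d i * e i)"
  by (simp add: vec_eq_iff mult_diagm_entry) (simp add: diagm_def)

lemma diag_conj_entry:
  "(P ** diagm d ** transpose P) $ j $ k = (\<Sum>i\<in>UNIV. P $ j $ i * d i * P $ k $ i)"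
  by (subst matrix_matrix_mult_def) (simp add: mult_diagm_entry transpose_def)

lemma spectral:
  fixes H :: "real^'n^'n"
  assumes sym: "transpose H = H"
  shows "\<exists>(P::real^'n^'n) l. transpose P ** P = mat 1 \<and> P ** transpose P = mat 1 \<and> H = P ** diagm l ** transpose P"
proof -
  obtain B where fB: "finite B" and cB: "card B = CARD('n)" and oB: "pairwise orthogonal B"
      and eB: "\<forall>b\<in>B. norm b = 1 \<and> (\<exists>c. H *v b = c *\<^sub>R b)"
    using eig_sets[OF sym, of "CARD('n)"] by auto
  obtain f where f: "bij_betw f (UNIV::'n set) B"
    using finite_same_card_bij[of "UNIV::'n set" B] fB cB by auto
  define P :: "real^'n^'n" where "P = (\<chi> i j. f j $ i)"
  define l where "l = (\<lambda>j. SOME c. H *v f j = c *\<^sub>R f j)"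
  have fB': "f j \<in> B" for j using f by (auto simp: bij_betw_def)
  have lj: "H *v f j = l j *\<^sub>R f j" for j
    unfolding l_def by (rule someI_ex) (use eB fB' in blast)
  have inner_f: "inner (f j) (f k) = (if j = k then 1 else 0)" for j k
  proof (cases "j = k")
    case True then show ?thesis using eB fB'[of j] by (simp add: dot_square_norm)
  next
    case False
    then have "f j \<noteq> f k" using f by (auto simp: bij_betw_def inj_on_def)
    then show ?thesis using oB fB'[of j] fB'[of k] False by (auto simp: pairwise_def orthogonal_def)
  qed
  have PtP: "transpose P ** P = mat 1"
    using inner_f by (simp add: vec_eq_iff matrix_matrix_mult_def transpose_def P_def inner_vec_def mat_def)
  have PPt: "P ** transpose P = mat 1" using PtP matrix_left_right_inverse by blast
  have HP: "H ** P = P ** diagm l"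
  proof -
    have "(H ** P) $ i $ k = (H *v f k) $ i" for i k
      by (simp add: matrix_matrix_mult_def matrix_vector_mult_def P_def)
    then show ?thesis by (simp add: vec_eq_iff mult_diagm_entry lj P_def mult.commute)
  qed
  have "H = H ** (P ** transpose P)" using PPt by simp
  also have "\<dots> = P ** diagm l ** transpose P" by (metis HP matrix_mul_assoc)
  finally have "H = P ** diagm l ** transpose P" .
  with PtP PPt show ?thesis by (intro exI[of _ P] exI[of _ l]) simp
qed


lemma exp_term_sums: "(\<lambda>m. c * (d::complex)^m / of_nat (fact m)) sums (c * exp d)"
proof -
  have "(\<lambda>m. c * (d^m /\<^sub>R fact m)) sums (c * exp d)" by (rule sums_mult[OF exp_converges])
  moreover have "c * (d^m /\<^sub>R fact m) = c * d^m / of_nat (fact m)" for m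
    by (simp add: scaleR_conv_of_real divide_inverse)
  ultimately show ?thesis by simp
qed

lemma exp_formula:
  fixes P :: "real^'n^'n" and l :: "'n \<Rightarrow> real"
  assumes PtP: "transpose P ** P = mat 1" and PPt: "P ** transpose P = mat 1"
    and H: "H = P ** diagm l ** transpose P"
  shows "mat_exp (\<chi> j k. \<i> * complex_of_real t * complex_of_real (H$j$k)) $ j $ k
       = (\<Sum>i\<in>UNIV. complex_of_real (P$j$i * P$k$i) * exp (\<i> * complex_of_real (t * l i)))"
proof -
  define Pc :: "complex^'n^'n" where "Pc = (\<chi> i j. complex_of_real (P$i$j))"
  define d where "d = (\<lambda>i. \<i> * complex_of_real (t * l i))"
  have e1: "(transpose Pc ** Pc) $ i $ j = of_real ((transpose P ** P) $ i $ j)" for i j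
    by (simp add: matrix_matrix_mult_def transpose_def Pc_def)
  have PcPc: "transpose Pc ** Pc = mat 1"
    using e1 PtP by (simp add: vec_eq_iff mat_def)
  have e2: "(Pc ** transpose Pc) $ i $ j = of_real ((P ** transpose P) $ i $ j)" for i j
    by (simp add: matrix_matrix_mult_def transpose_def Pc_def)
  have PcPct: "Pc ** transpose Pc = mat 1"
    using e2 PPt by (simp add: vec_eq_iff mat_def)
  have M: "(\<chi> j k. \<i> * complex_of_real t * complex_of_real (H$j$k)) = Pc ** diagm d ** transpose Pc"
    by (simp add: vec_eq_iff H diag_conj_entry Pc_def d_def sum_distrib_left algebra_simps)
  have pow: "mat_pow (Pc ** diagm d ** transpose Pc) m = Pc ** diagm (\<lambda>i. d i ^ m) ** transpose Pc" for m
  proof (induction m)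
    case 0
    have "diagm (\<lambda>i. d i ^ 0) = (mat 1 :: complex^'n^'n)" by (simp add: diagm_def mat_def)
    then show ?case using PcPct by simp
  next
    case (Suc m)
    have "mat_pow (Pc ** diagm d ** transpose Pc) (Suc m)
        = (Pc ** diagm d ** transpose Pc) ** (Pc ** diagm (\<lambda>i. d i ^ m) ** transpose Pc)"
      using Suc by simp
    also have "\<dots> = Pc ** diagm d ** (transpose Pc ** Pc) ** diagm (\<lambda>i. d i ^ m) ** transpose Pc"
      by (simp add: matrix_mul_assoc)
    also have "\<dots> = Pc ** (diagm d ** diagm (\<lambda>i. d i ^ m)) ** transpose Pc"
      by (simp add: PcPc matrix_mul_assoc)
    also have "\<dots> = Pc ** diagm (\<lambda>i. d i ^ Suc m) ** transpose Pc"
      by (simp add: diagm_mult)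
    finally show ?case .
  qed
  have ent: "mat_pow (\<chi> j k. \<i> * complex_of_real t * complex_of_real (H$j$k)) m $ j $ k
      = (\<Sum>i\<in>UNIV. (Pc$j$i * Pc$k$i) * d i ^ m)" for m
    unfolding M pow diag_conj_entry by (simp add: algebra_simps)
  have "(\<lambda>m. \<Sum>i\<in>UNIV. (Pc$j$i * Pc$k$i) * d i ^ m / of_nat (fact m))
        sums (\<Sum>i\<in>UNIV. (Pc$j$i * Pc$k$i) * exp (d i))"
    by (rule sums_sum) (rule exp_term_sums)
  then have "(\<lambda>m. mat_pow (\<chi> j k. \<i> * complex_of_real t * complex_of_real (H$j$k)) m $ j $ k / of_nat (fact m))
        sums (\<Sum>i\<in>UNIV. (Pc$j$i * Pc$k$i) * exp (d i))"
    by (simp add: ent sum_divide_distrib)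
  then show ?thesis unfolding mat_exp_def by (simp add: sums_iff Pc_def d_def)
qed



lemma cos_lower: "cos (x::real) \<ge> 1 - x^2 / 2"
proof -
  have "cos x = cos (2 * (x/2))" by simp
  also have "\<dots> = 1 - 2 * (sin (x/2))^2" by (rule cos_double_sin)
  finally have c: "cos x = 1 - 2 * (sin (x/2))^2" .
  have "\<bar>sin (x/2)\<bar> \<le> \<bar>x/2\<bar>" by (rule abs_sin_x_le_abs_x)
  then have "(sin (x/2))^2 \<le> (x/2)^2" by (metis abs_le_square_iff)
  then show ?thesis using c by (simp add: power_divide)
qed

lemma aux_alg: "1 - (h::real)^2/2 * (A - 2*m*m + m^2*1) = 1 - h^2 * (A - m^2) / 2"
  by (simp add: power2_eq_square algebra_simps)

lemma var_bound:
  fixes q l :: "'n::finite \<Rightarrow> real" and h :: real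
  assumes q0: "\<And>i. q i \<ge> 0" and q1: "(\<Sum>i\<in>UNIV. q i) = 1"
  shows "(cmod (\<Sum>i\<in>UNIV. complex_of_real (q i) * exp (\<i> * complex_of_real (h * l i))))^2
         \<ge> 1 - h^2 * ((\<Sum>i\<in>UNIV. q i * (l i)^2) - (\<Sum>i\<in>UNIV. q i * l i)^2)"
proof -
  define \<mu> where "\<mu> = (\<Sum>i\<in>UNIV. q i * l i)"
  define V where "V = (\<Sum>i\<in>UNIV. q i * (l i)^2) - \<mu>^2"
  define S where "S = (\<Sum>i\<in>UNIV. complex_of_real (q i) * exp (\<i> * complex_of_real (h * l i)))"
  define X where "X = exp (- \<i> * complex_of_real (h * \<mu>)) * S"
  have cX: "cmod X = cmod S" unfolding X_def by (simp add: norm_mult)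
  have X: "X = (\<Sum>i\<in>UNIV. complex_of_real (q i) * exp (\<i> * complex_of_real (h * (l i - \<mu>))))"
    unfolding X_def S_def sum_distrib_left
    by (rule sum.cong) (simp_all add: algebra_simps exp_add[symmetric] exp_diff[symmetric])
  have ReX: "Re X = (\<Sum>i\<in>UNIV. q i * cos (h * (l i - \<mu>)))"
    unfolding X by (simp add: Re_sum Re_exp)
  have "(\<Sum>i\<in>UNIV. q i * (1 - (h * (l i - \<mu>))^2 / 2)) \<le> Re X"
    unfolding ReX by (rule sum_mono) (simp add: mult_left_mono q0 cos_lower)
  moreover have "(\<Sum>i\<in>UNIV. q i * (1 - (h * (l i - \<mu>))^2 / 2)) = 1 - h^2 * V / 2"
  proof -
    have "(\<Sum>i\<in>UNIV. q i * (1 - (h * (l i - \<mu>))^2 / 2))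
        = (\<Sum>i\<in>UNIV. q i) - h^2/2 * ((\<Sum>i\<in>UNIV. q i * (l i)^2) - 2 * \<mu> * (\<Sum>i\<in>UNIV. q i * l i) + \<mu>^2 * (\<Sum>i\<in>UNIV. q i))"
    proof -
      have "(\<Sum>i\<in>UNIV. q i * (1 - (h * (l i - \<mu>))^2 / 2))
          = (\<Sum>i\<in>UNIV. q i - h^2/2 * (q i * (l i)^2 - 2 * \<mu> * (q i * l i) + \<mu>^2 * q i))"
        by (rule sum.cong) (simp_all add: power2_eq_square field_simps)
      also have "\<dots> = (\<Sum>i\<in>UNIV. q i) - h^2/2 * ((\<Sum>i\<in>UNIV. q i * (l i)^2) - 2 * \<mu> * (\<Sum>i\<in>UNIV. q i * l i) + \<mu>^2 * (\<Sum>i\<in>UNIV. q i))"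
      proof -
        have a: "(\<Sum>i\<in>UNIV. h^2/2 * (q i * (l i)^2 - 2 * \<mu> * (q i * l i) + \<mu>^2 * q i))
             = h^2/2 * (\<Sum>i\<in>UNIV. (q i * (l i)^2 - 2 * \<mu> * (q i * l i) + \<mu>^2 * q i))"
          by (rule sum_distrib_left[symmetric])
        have b: "(\<Sum>i\<in>UNIV. (q i * (l i)^2 - 2 * \<mu> * (q i * l i) + \<mu>^2 * q i))
             = (\<Sum>i\<in>UNIV. q i * (l i)^2) - 2 * \<mu> * (\<Sum>i\<in>UNIV. q i * l i) + \<mu>^2 * (\<Sum>i\<in>UNIV. q i)"
          by (simp add: sum.distrib sum_subtractf sum_distrib_left)
        show ?thesis by (simp only: sum_subtractf a b)
      qed
      finally show ?thesis .
    qed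
    note E = this
    have B: "(\<Sum>i\<in>UNIV. q i * l i) = \<mu>" by (simp add: \<mu>_def)
    have "(\<Sum>i\<in>UNIV. q i * (1 - (h * (l i - \<mu>))^2 / 2)) = 1 - h^2/2 * ((\<Sum>i\<in>UNIV. q i * (l i)^2) - 2 * \<mu> * \<mu> + \<mu>^2 * 1)"
      using E unfolding B q1 .
    also have "\<dots> = 1 - h^2 * V / 2" unfolding V_def by (rule aux_alg)
    finally show ?thesis .
  qed
  ultimately have ReXb: "1 - h^2 * V / 2 \<le> Re X" by simp
  have ReS: "Re X \<le> cmod S" using cX complex_Re_le_cmod by metis
  have fin: "(cmod S)^2 \<ge> 1 - h^2 * V"
  proof (cases "1 - h^2 * V / 2 \<ge> 0")
    case True
    then have "(1 - h^2 * V / 2)^2 \<le> (cmod S)^2" using ReXb ReS by (intro power_mono) auto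
    moreover have "1 - h^2 * V \<le> (1 - h^2 * V / 2)^2"
    proof -
      have "(1 - h^2 * V / 2)^2 = 1 - h^2 * V + (h^2 * V)^2 / 4" by (simp add: power2_eq_square field_simps)
      then show ?thesis using zero_le_power2[of "h^2 * V"] by linarith
    qed
    ultimately show ?thesis by linarith
  next
    case False
    have "0 \<le> h^2 * V" if "1 - h^2 * V / 2 \<ge> 0" using that False by simp
    have "1 - h^2 * V < 0" using False by linarith
    then show ?thesis using zero_le_power2[of "cmod S"] by linarith
  qed
  then show ?thesis unfolding S_def V_def \<mu>_def .
qed



lemma transfer_step:
  fixes a b l :: "'n::finite \<Rightarrow> real"
  assumes a1: "(\<Sum>i\<in>UNIV. (a i)^2) = 1" and b1: "(\<Sum>i\<in>UNIV. (b i)^2) = 1"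
    and one: "cmod (\<Sum>i\<in>UNIV. complex_of_real (a i * b i) * exp (\<i> * complex_of_real (t0 * l i))) = 1"
  shows "(\<Sum>i\<in>UNIV. complex_of_real (a i * b i) * exp (\<i> * complex_of_real ((t0 + h) * l i)))
       = (\<Sum>i\<in>UNIV. complex_of_real (a i * b i) * exp (\<i> * complex_of_real (t0 * l i)))
         * (\<Sum>i\<in>UNIV. complex_of_real ((a i)^2) * exp (\<i> * complex_of_real (h * l i)))"
proof -
  define z where "z = (\<lambda>i. exp (\<i> * complex_of_real (t0 * l i)))"
  define w where "w = (\<lambda>i. exp (\<i> * complex_of_real (h * l i)))"
  define \<omega> where "\<omega> = (\<Sum>i\<in>UNIV. complex_of_real (a i * b i) * z i)"
  have zz: "z i * cnj (z i) = 1" for i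
    using complex_norm_square[of "z i"] by (simp add: z_def norm_exp_i_times)
  have oo: "\<omega> * cnj \<omega> = 1"
    using complex_norm_square[of \<omega>] one by (simp add: \<omega>_def z_def)
  define D where "D = (\<lambda>i. b i * z i - a i * \<omega>)"
  have Di: "(cmod (D i))^2 = (b i)^2 + (a i)^2 - 2 * (a i * b i) * Re (z i * cnj \<omega>)" for i
  proof -
    have "complex_of_real ((cmod (D i))^2) = D i * cnj (D i)" by (rule complex_norm_square)
    also have "\<dots> = (b i)^2 * (z i * cnj (z i)) + (a i)^2 * (\<omega> * cnj \<omega>)
        - (a i * b i) * (z i * cnj \<omega> + cnj (z i * cnj \<omega>))"
      by (simp add: D_def algebra_simps power2_eq_square)
    also have "\<dots> = complex_of_real ((b i)^2 + (a i)^2 - 2 * (a i * b i) * Re (z i * cnj \<omega>))"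
      by (simp only: zz oo complex_add_cnj) simp
    finally show ?thesis by (simp only: of_real_eq_iff)
  qed
  have sumRe: "(\<Sum>i\<in>UNIV. (a i * b i) * Re (z i * cnj \<omega>)) = 1"
  proof -
    have "(\<Sum>i\<in>UNIV. (a i * b i) * Re (z i * cnj \<omega>)) = Re ((\<Sum>i\<in>UNIV. complex_of_real (a i * b i) * z i) * cnj \<omega>)"
      by (simp add: Re_sum sum_distrib_right mult.assoc)
    also have "\<dots> = Re (\<omega> * cnj \<omega>)" by (simp only: \<omega>_def)
    also have "\<dots> = 1" using oo by simp
    finally show ?thesis .
  qed
  have "(\<Sum>i\<in>UNIV. (cmod (D i))^2) = (\<Sum>i\<in>UNIV. (b i)^2) + (\<Sum>i\<in>UNIV. (a i)^2) - 2 * (\<Sum>i\<in>UNIV. (a i * b i) * Re (z i * cnj \<omega>))"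
    by (simp add: Di sum.distrib sum_subtractf sum_distrib_left mult.assoc)
  also have "\<dots> = 0" using a1 b1 sumRe by simp
  finally have "(\<Sum>i\<in>UNIV. (cmod (D i))^2) = 0" .
  then have "\<forall>i\<in>UNIV. (cmod (D i))^2 = 0" by (subst (asm) sum_nonneg_eq_0_iff) auto
  then have bz: "b i * z i = a i * \<omega>" for i by (simp add: D_def)
  have "(\<Sum>i\<in>UNIV. complex_of_real (a i * b i) * exp (\<i> * complex_of_real ((t0 + h) * l i)))
      = (\<Sum>i\<in>UNIV. a i * (b i * z i) * w i)"
    by (rule sum.cong) (simp_all add: z_def w_def algebra_simps flip: exp_add)
  also have "\<dots> = (\<Sum>i\<in>UNIV. \<omega> * (complex_of_real ((a i)^2) * w i))"
    by (rule sum.cong[OF refl], subst bz) (simp add: power2_eq_square mult_ac)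
  also have "\<dots> = \<omega> * (\<Sum>i\<in>UNIV. complex_of_real ((a i)^2) * w i)"
    by (simp add: sum_distrib_left)
  finally show ?thesis by (simp add: \<omega>_def z_def w_def)
qed

theorem corollary2p3:
  fixes E :: "'n::finite \<Rightarrow> 'n \<Rightarrow> bool" and w :: "'n \<Rightarrow> 'n \<Rightarrow> real"
    and H :: "real ^'n ^'n" and s r :: 'n and t0 h :: real
  assumes "weighted_graph E w" and "connected_graph E"
    and "H = adjacency_matrix E w \<or> H = laplacian_matrix E w"
    and "fidelity H s r t0 = 1"
    and "\<bar>h\<bar> < pi / (Max (eigenvalues H) - Min (eigenvalues H))"
  shows "fidelity H s r (t0 + h) \<ge> 1 - h\<^sup>2 * ((H ** H) $ s $ s - (H $ s $ s)\<^sup>2)"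
proof -
  have adjsym: "adjacency_matrix E w $ i $ j = adjacency_matrix E w $ j $ i" for i j
    using assms(1) by (auto simp: adjacency_matrix_def weighted_graph_def)
  have Hsym: "H $ i $ j = H $ j $ i" for i j
    using assms(3)
  proof
    assume "H = adjacency_matrix E w" then show ?thesis using adjsym by simp
  next
    assume "H = laplacian_matrix E w" then show ?thesis using adjsym by (simp add: laplacian_matrix_def)
  qed
  have sym: "transpose H = H" using Hsym by (simp add: vec_eq_iff transpose_def)
  obtain P :: "real^'n^'n" and l where PtP: "transpose P ** P = mat 1" and PPt: "P ** transpose P = mat 1"
    and HP: "H = P ** diagm l ** transpose P" using spectral[OF sym] by blast
  define a where "a = (\<lambda>i. P $ s $ i)"
  define b where "b = (\<lambda>i. P $ r $ i)"
  have fid: "fidelity H s r t = (cmod (\<Sum>i\<in>UNIV. complex_of_real (a i * b i) * exp (\<i> * complex_of_real (t * l i))))^2" for t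
    unfolding fidelity_def exp_formula[OF PtP PPt HP] a_def b_def ..
  have a1: "(\<Sum>i\<in>UNIV. (a i)^2) = 1"
  proof -
    have "(P ** transpose P) $ s $ s = 1" using PPt by (simp add: mat_def)
    then show ?thesis by (simp add: a_def matrix_matrix_mult_def transpose_def power2_eq_square)
  qed
  have b1: "(\<Sum>i\<in>UNIV. (b i)^2) = 1"
  proof -
    have "(P ** transpose P) $ r $ r = 1" using PPt by (simp add: mat_def)
    then show ?thesis by (simp add: b_def matrix_matrix_mult_def transpose_def power2_eq_square)
  qed
  have one: "cmod (\<Sum>i\<in>UNIV. complex_of_real (a i * b i) * exp (\<i> * complex_of_real (t0 * l i))) = 1"
  proof -
    have "(cmod (\<Sum>i\<in>UNIV. complex_of_real (a i * b i) * exp (\<i> * complex_of_real (t0 * l i))))^2 = 1"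
      using assms(4) fid[of t0] by simp
    then show ?thesis by (simp add: power2_eq_1_iff) (smt (verit) norm_ge_zero)
  qed
  have step: "cmod (\<Sum>i\<in>UNIV. complex_of_real (a i * b i) * exp (\<i> * complex_of_real ((t0 + h) * l i)))
      = cmod (\<Sum>i\<in>UNIV. complex_of_real ((a i)^2) * exp (\<i> * complex_of_real (h * l i)))"
    unfolding transfer_step[OF a1 b1 one] norm_mult one by simp
  have vb: "(cmod (\<Sum>i\<in>UNIV. complex_of_real ((a i)^2) * exp (\<i> * complex_of_real (h * l i))))^2
         \<ge> 1 - h^2 * ((\<Sum>i\<in>UNIV. (a i)^2 * (l i)^2) - (\<Sum>i\<in>UNIV. (a i)^2 * l i)^2)"
    by (rule var_bound) (simp_all add: a1)
  have HH: "H ** H = P ** diagm (\<lambda>i. l i * l i) ** transpose P"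
  proof -
    have "H ** H = P ** diagm l ** (transpose P ** P) ** diagm l ** transpose P"
      by (simp add: HP matrix_mul_assoc)
    also have "\<dots> = P ** (diagm l ** diagm l) ** transpose P" by (simp add: PtP matrix_mul_assoc)
    finally show ?thesis by (simp add: diagm_mult)
  qed
  have HHss: "(H ** H) $ s $ s = (\<Sum>i\<in>UNIV. (a i)^2 * (l i)^2)"
    unfolding HH diag_conj_entry by (simp add: a_def power2_eq_square mult_ac)
  have Hss: "H $ s $ s = (\<Sum>i\<in>UNIV. (a i)^2 * l i)"
    unfolding HP diag_conj_entry by (simp add: a_def power2_eq_square mult_ac)
  show ?thesis unfolding fid step HHss Hss using vb .
qed

end
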